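(* Let $G$ be a graph on $n\ge 2$ vertices and let $P_4(G)$ be the number of paths of length $4$ in $G$ (subgraphs isomorphic to the path with $4$ edges). For distinct vertices $u,v$ let $d(u,v)$ be the number of vertices adjacent to both $u$ and $v$. Then $$P_4(G)\le \frac12\sum_{u\in V(G)}\sum_{v\in V(G),\,v\ne u} d(u)\,d(v)\,d(u,v),$$ and consequently, if $x_1\ge x_2\ge\cdots\ge x_n$ is the degree sequence of $G$ in non-increasing order, $$P_4(G)\le \sum_{i=1}^{n-1}\sum_{j=i+1}^{n} x_i x_j^2 .$$
   Context: $d(u)$ denotes the degree of vertex $u$ in $G$. *)

theory Defs
  imports Complex_Main
begin

definition simple_graph :: "'a set \<Rightarrow> ('a \<Rightarrow> 'a \<Rightarrow> bool) \<Rightarrow> bool" where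
  "simple_graph V E \<longleftrightarrow> finite V \<and> (\<forall>u v. E u v \<longrightarrow> E v u)
     \<and> (\<forall>u. \<not> E u u) \<and> (\<forall>u v. E u v \<longrightarrow> u \<in> V \<and> v \<in> V)"

definition deg :: "'a set \<Rightarrow> ('a \<Rightarrow> 'a \<Rightarrow> bool) \<Rightarrow> 'a \<Rightarrow> nat" where
  "deg V E u = card {v \<in> V. E u v}"

definition codeg :: "'a set \<Rightarrow> ('a \<Rightarrow> 'a \<Rightarrow> bool) \<Rightarrow> 'a \<Rightarrow> 'a \<Rightarrow> nat" where
  "codeg V E u v = card {w \<in> V. E u w \<and> E v w}"

(* Such a subgraph has no isolated vertices, so it is determined by its
   edge set {v0v1, v1v2, v2v3, v3v4} for 5 distinct vertices v0,...,v4
   with consecutive ones adjacent. *)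
definition P4 :: "'a set \<Rightarrow> ('a \<Rightarrow> 'a \<Rightarrow> bool) \<Rightarrow> nat" where
  "P4 V E = card {{{a,b},{b,c},{c,d},{d,e}} | a b c d e.
      a \<in> V \<and> b \<in> V \<and> c \<in> V \<and> d \<in> V \<and> e \<in> V \<and>
      distinct [a,b,c,d,e] \<and> E a b \<and> E b c \<and> E c d \<and> E d e}"

end

theory Submission
  imports Defs
begin

lemma fiber_card:
  assumes fin: "finite T" and sw: "\<And>t. t \<in> T \<Longrightarrow> r t \<in> T \<and> r t \<noteq> t \<and> f (r t) = f t"
  shows "2 * card (f ` T) \<le> card T"
proof -
  have eq: "T = (\<Union>y\<in>f ` T. {x\<in>T. f x = y})" by auto
  have "card T = (\<Sum>y\<in>f ` T. card {x\<in>T. f x = y})"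
    by (subst eq, rule card_UN_disjoint) (use fin in auto)
  moreover have "(\<Sum>y\<in>f ` T. 2) \<le> (\<Sum>y\<in>f ` T. card {x\<in>T. f x = y})"
  proof (rule sum_mono)
    fix y assume "y \<in> f ` T"
    then obtain t where t: "t \<in> T" "f t = y" by auto
    have "{t, r t} \<subseteq> {x\<in>T. f x = y}" using t sw[OF t(1)] by auto
    moreover have "card {t, r t} = 2" using sw[OF t(1)] by auto
    ultimately show "2 \<le> card {x\<in>T. f x = y}"
      by (metis (no_types, lifting) card_mono fin finite_subset mem_Collect_eq subsetI)
  qed
  ultimately show ?thesis by (simp add: mult.commute)
qed

lemma part1:
  assumes G: "simple_graph V E"
  shows "2 * P4 V E \<le> (\<Sum>u\<in>V. \<Sum>v\<in>V - {u}. deg V E u * deg V E v * codeg V E u v)"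
proof -
  have finV: "finite V" and sym: "\<And>u v. E u v \<Longrightarrow> E v u"
    and inV: "\<And>u v. E u v \<Longrightarrow> u \<in> V \<and> v \<in> V"
    using G unfolding simple_graph_def by auto
  define T where "T = {(a,b,c,d,e). a \<in> V \<and> b \<in> V \<and> c \<in> V \<and> d \<in> V \<and> e \<in> V \<and>
      distinct [a,b,c,d,e] \<and> E a b \<and> E b c \<and> E c d \<and> E d e}"
  define f :: "'a \<times> 'a \<times> 'a \<times> 'a \<times> 'a \<Rightarrow> 'a set set" where
    "f = (\<lambda>(a,b,c,d,e). {{a,b},{b,c},{c,d},{d,e}})"
  define r :: "'a \<times> 'a \<times> 'a \<times> 'a \<times> 'a \<Rightarrow> _" where "r = (\<lambda>(a,b,c,d,e). (e,d,c,b,a))"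
  have P: "P4 V E = card (f ` T)"
    unfolding P4_def
  proof (intro arg_cong[where f=card] set_eqI iffI)
    fix x assume "x \<in> {{{a,b},{b,c},{c,d},{d,e}} | a b c d e.
      a \<in> V \<and> b \<in> V \<and> c \<in> V \<and> d \<in> V \<and> e \<in> V \<and>
      distinct [a,b,c,d,e] \<and> E a b \<and> E b c \<and> E c d \<and> E d e}"
    then obtain a b c d e where "x = {{a,b},{b,c},{c,d},{d,e}}" "a \<in> V \<and> b \<in> V \<and> c \<in> V \<and> d \<in> V \<and> e \<in> V \<and>
      distinct [a,b,c,d,e] \<and> E a b \<and> E b c \<and> E c d \<and> E d e" by blast
    then show "x \<in> f ` T" unfolding T_def f_def by (intro rev_image_eqI[of "(a,b,c,d,e)"]) auto
  next
    fix x assume "x \<in> f ` T"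
    then obtain a b c d e where "x = {{a,b},{b,c},{c,d},{d,e}}" "a \<in> V \<and> b \<in> V \<and> c \<in> V \<and> d \<in> V \<and> e \<in> V \<and>
      distinct [a,b,c,d,e] \<and> E a b \<and> E b c \<and> E c d \<and> E d e" unfolding T_def f_def by auto
    then show "x \<in> {{{a,b},{b,c},{c,d},{d,e}} | a b c d e.
      a \<in> V \<and> b \<in> V \<and> c \<in> V \<and> d \<in> V \<and> e \<in> V \<and>
      distinct [a,b,c,d,e] \<and> E a b \<and> E b c \<and> E c d \<and> E d e}" by blast
  qed
  have finT: "finite T"
    by (rule finite_subset[of _ "V \<times> V \<times> V \<times> V \<times> V"]) (auto simp: T_def finV)
  have "2 * card (f ` T) \<le> card T"
  proof (rule fiber_card[OF finT, of r])
    fix t assume "t \<in> T"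
    then obtain a b c d e where t: "t = (a,b,c,d,e)" and h: "a \<in> V \<and> b \<in> V \<and> c \<in> V \<and> d \<in> V \<and> e \<in> V \<and>
      distinct [a,b,c,d,e] \<and> E a b \<and> E b c \<and> E c d \<and> E d e" unfolding T_def by auto
    show "r t \<in> T \<and> r t \<noteq> t \<and> f (r t) = f t"
      using h sym unfolding t r_def T_def f_def by (auto simp: insert_commute)
  qed
  define N where "N = (\<lambda>b. {v\<in>V. E b v})"
  define C where "C = (\<lambda>b d. {w\<in>V. E b w \<and> E d w})"
  define S where "S = (SIGMA b:V. SIGMA d:V-{b}. N b \<times> (C b d \<times> N d))"
  define g :: "'a \<times> 'a \<times> 'a \<times> 'a \<times> 'a \<Rightarrow> _" where "g = (\<lambda>(a,b,c,d,e). (b,d,a,c,e))"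
  have finS: "finite S" unfolding S_def N_def C_def using finV by auto
  have "card T \<le> card S"
  proof (rule card_inj_on_le[of g])
    show "inj_on g T" unfolding inj_on_def g_def by auto
    show "g ` T \<subseteq> S" unfolding T_def g_def S_def N_def C_def using sym by auto
  qed (rule finS)
  also have "card S = (\<Sum>u\<in>V. \<Sum>v\<in>V - {u}. deg V E u * deg V E v * codeg V E u v)"
    unfolding S_def using finV
    by (simp add: card_cartesian_product N_def C_def deg_def codeg_def mult_ac)
  finally show ?thesis using P \<open>2 * card (f ` T) \<le> card T\<close> by linarith
qed

lemma part2:
  assumes G: "simple_graph V E"
    and bij: "bij_betw \<sigma> {1..card V} V"
    and xd: "\<forall>i\<in>{1..card V}. x i = deg V E (\<sigma> i)"
    and mono: "\<forall>i j. 1 \<le> i \<longrightarrow> i \<le> j \<longrightarrow> j \<le> card V \<longrightarrow> x j \<le> x i"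
  shows "(\<Sum>u\<in>V. \<Sum>v\<in>V - {u}. deg V E u * deg V E v * codeg V E u v)
     \<le> 2 * (\<Sum>i=1..card V - 1. \<Sum>j=i+1..card V. x i * (x j)^2)"
proof -
  define n where "n = card V"
  define I where "I = {1..n}"
  define D where "D = deg V E"
  define h where "h = (\<lambda>u v. D u * D v * min (D u) (D v))"
  define g where "g = (\<lambda>i j. x i * x j * min (x i) (x j))"
  have finV: "finite V" using G unfolding simple_graph_def by auto
  have "(\<Sum>u\<in>V. \<Sum>v\<in>V - {u}. deg V E u * deg V E v * codeg V E u v)
      \<le> (\<Sum>u\<in>V. \<Sum>v\<in>V - {u}. h u v)"
  proof (intro sum_mono)
    fix u v
    have "codeg V E u v \<le> D u" unfolding codeg_def D_def deg_def
      by (rule card_mono) (use finV in auto)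
    moreover have "codeg V E u v \<le> D v" unfolding codeg_def D_def deg_def
      by (rule card_mono) (use finV in auto)
    ultimately show "deg V E u * deg V E v * codeg V E u v \<le> h u v"
      unfolding h_def D_def by simp
  qed
  also have "(\<Sum>u\<in>V. \<Sum>v\<in>V - {u}. h u v) = (\<Sum>i\<in>I. \<Sum>j\<in>I - {i}. h (\<sigma> i) (\<sigma> j))"
  proof -
    have b: "bij_betw \<sigma> I V" using bij unfolding I_def n_def .
    have "(\<Sum>u\<in>V. \<Sum>v\<in>V - {u}. h u v) = (\<Sum>i\<in>I. \<Sum>v\<in>V - {\<sigma> i}. h (\<sigma> i) v)"
      using sum.reindex_bij_betw[OF b, of "\<lambda>u. \<Sum>v\<in>V - {u}. h u v"] by simp
    also have "\<dots> = (\<Sum>i\<in>I. \<Sum>j\<in>I - {i}. h (\<sigma> i) (\<sigma> j))"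
    proof (rule sum.cong[OF refl])
      fix i assume "i \<in> I"
      have b2: "bij_betw \<sigma> (I - {i}) (V - {\<sigma> i})"
        using bij_betw_DiffI[OF b, of "{i}" "{\<sigma> i}"] \<open>i \<in> I\<close> b
        by (auto simp: bij_betw_def)
      show "(\<Sum>v\<in>V - {\<sigma> i}. h (\<sigma> i) v) = (\<Sum>j\<in>I - {i}. h (\<sigma> i) (\<sigma> j))"
        using sum.reindex_bij_betw[OF b2, of "\<lambda>v. h (\<sigma> i) v"] by simp
    qed
    finally show ?thesis .
  qed
  also have "\<dots> = (\<Sum>i\<in>I. \<Sum>j\<in>I - {i}. g i j)"
    using xd unfolding g_def h_def D_def I_def n_def by (intro sum.cong) auto
  also have "\<dots> = (\<Sum>p\<in>(SIGMA i:I. I - {i}). g (fst p) (snd p))"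
    by (subst sum.Sigma) (auto simp: I_def split_beta)
  also have "\<dots> = 2 * (\<Sum>p\<in>{p\<in>I\<times>I. fst p < snd p}. g (fst p) (snd p))"
  proof -
    define A where "A = {p\<in>I\<times>I. fst p < snd p}"
    define B where "B = {p\<in>I\<times>I. snd p < fst p}"
    have U: "(SIGMA i:I. I - {i}) = A \<union> B" unfolding A_def B_def by auto
    have finA: "finite A" "finite B" unfolding A_def B_def I_def by auto
    have Bs: "B = prod.swap ` A" unfolding A_def B_def by auto
    have "(\<Sum>p\<in>B. g (fst p) (snd p)) = (\<Sum>p\<in>A. g (snd p) (fst p))"
      unfolding Bs by (subst sum.reindex) (auto simp: inj_on_def)
    also have "\<dots> = (\<Sum>p\<in>A. g (fst p) (snd p))"
      unfolding g_def by (simp add: ac_simps min.commute)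
    finally have "(\<Sum>p\<in>B. g (fst p) (snd p)) = (\<Sum>p\<in>A. g (fst p) (snd p))" .
    moreover have "A \<inter> B = {}" unfolding A_def B_def by auto
    ultimately show ?thesis unfolding U A_def[symmetric]
      by (simp add: sum.union_disjoint finA)
  qed
  also have "(\<Sum>p\<in>{p\<in>I\<times>I. fst p < snd p}. g (fst p) (snd p))
      = (\<Sum>i=1..n - 1. \<Sum>j=i+1..n. x i * (x j)^2)"
  proof -
    have S: "{p\<in>I\<times>I. fst p < snd p} = (SIGMA i:{1..n-1}. {i+1..n})"
      unfolding I_def by auto
    have "(\<Sum>p\<in>(SIGMA i:{1..n-1}. {i+1..n}). g (fst p) (snd p))
        = (\<Sum>i=1..n - 1. \<Sum>j=i+1..n. g i j)"
      by (subst sum.Sigma) (auto simp: split_beta)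
    also have "\<dots> = (\<Sum>i=1..n - 1. \<Sum>j=i+1..n. x i * (x j)^2)"
    proof (intro sum.cong refl)
      fix i j assume "i \<in> {1..n-1}" "j \<in> {i+1..n}"
      then have "x j \<le> x i" using mono unfolding n_def by auto
      then show "g i j = x i * (x j)^2" unfolding g_def by (simp add: min_def power2_eq_square)
    qed
    finally show ?thesis unfolding S .
  qed
  finally show ?thesis unfolding n_def .
qed

theorem mainTheorem2:
  fixes V :: "'a set" and E :: "'a \<Rightarrow> 'a \<Rightarrow> bool"
  assumes G: "simple_graph V E"
    and n2: "card V \<ge> 2"
  shows "real (P4 V E) \<le> (1/2) * (\<Sum>u\<in>V. \<Sum>v\<in>V - {u}.
            real (deg V E u) * real (deg V E v) * real (codeg V E u v))
    \<and> (\<forall>\<sigma> x. bij_betw \<sigma> {1..card V} V \<longrightarrow> (\<forall>i\<in>{1..card V}. x i = deg V E (\<sigma> i))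
           \<longrightarrow> (\<forall>i j. 1 \<le> i \<longrightarrow> i \<le> j \<longrightarrow> j \<le> card V \<longrightarrow> x j \<le> x i)
           \<longrightarrow> P4 V E \<le> (\<Sum>i=1..card V - 1. \<Sum>j=i+1..card V. x i * (x j)^2))"
proof
  have p1: "real (2 * P4 V E) \<le> real (\<Sum>u\<in>V. \<Sum>v\<in>V - {u}. deg V E u * deg V E v * codeg V E u v)"
    using part1[OF G] by (simp only: of_nat_le_iff)
  then show "real (P4 V E) \<le> (1/2) * (\<Sum>u\<in>V. \<Sum>v\<in>V - {u}.
            real (deg V E u) * real (deg V E v) * real (codeg V E u v))"
    by simp
  show "\<forall>\<sigma> x. bij_betw \<sigma> {1..card V} V \<longrightarrow> (\<forall>i\<in>{1..card V}. x i = deg V E (\<sigma> i))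
           \<longrightarrow> (\<forall>i j. 1 \<le> i \<longrightarrow> i \<le> j \<longrightarrow> j \<le> card V \<longrightarrow> x j \<le> x i)
           \<longrightarrow> P4 V E \<le> (\<Sum>i=1..card V - 1. \<Sum>j=i+1..card V. x i * (x j)^2)"
    using part1[OF G] part2[OF G] by fastforce
qed

end
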